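(* Let $i\geq 2$ be an integer and let $D$ be an oriented graph (a digraph with no pair of opposite arcs) with $D\in\mathcal{LE}_i$. Then $D$ has a vertex $v$ such that $|N^{++}(v)|\geq |N^+(v)|$, where $N^+(v)$ is the out-neighbourhood of $v$ and $N^{++}(v)=\big(\bigcup_{u\in N^+(v)}N^+(u)\big)\setminus N^+(v)$. (That is, Seymour's Second Neighbourhood Conjecture holds for every digraph in $\mathcal{LE}_i$, $i\ge 2$.)
   Context: All digraphs are finite, without loops or multiple arcs. Paths and cycles are directed; the length of a path or cycle is its number of arcs. A digraph is strong if for every ordered pair of vertices $x,y$ there is a directed path from $x$ to $y$. For a subdigraph $H$ of a digraph $D$, an ear of $H$ in $D$ is either a directed path in $D$ whose two end vertices lie in $H$ and whose internal vertices do not lie in $H$, or a directed cycle in $D$ having exactly one vertex in $H$. An ear decomposition of a strong digraph $D$ is a sequence $(D_0,D_1,\ldots,D_k)$ of strong subdigraphs of $D$ such that $D_0$ is a directed cycle, $D_{j+1}=D_j\cup P_j$ where $P_j$ is an ear of $D_j$ in $D$ for every $j\in\{0,\ldots,k-1\}$, and $D_k=D$. For an integer $i\geq 1$, $\mathcal{LE}_i$ denotes the family of strong digraphs having an ear decomposition in which every ear has length at least $i$. *)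

theory Defs
  imports Main
begin

definition digraph :: "'a set \<Rightarrow> ('a \<times> 'a) set \<Rightarrow> bool" where
  "digraph V A \<longleftrightarrow> finite V \<and> A \<subseteq> V \<times> V \<and> (\<forall>v. (v, v) \<notin> A)"

definition oriented :: "'a set \<Rightarrow> ('a \<times> 'a) set \<Rightarrow> bool" where
  "oriented V A \<longleftrightarrow> digraph V A \<and> (\<forall>u v. (u, v) \<in> A \<longrightarrow> (v, u) \<notin> A)"

definition strong :: "'a set \<Rightarrow> ('a \<times> 'a) set \<Rightarrow> bool" where
  "strong V A \<longleftrightarrow> (\<forall>x\<in>V. \<forall>y\<in>V. (x, y) \<in> (A \<inter> V \<times> V)\<^sup>*)"

text \<open>Directed paths are lists of distinct vertices; a path with vertex list xs has
  length (number of arcs) length xs - 1.\<close>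

definition dpath :: "('a \<times> 'a) set \<Rightarrow> 'a list \<Rightarrow> bool" where
  "dpath A xs \<longleftrightarrow> xs \<noteq> [] \<and> distinct xs \<and> (\<forall>k. Suc k < length xs \<longrightarrow> (xs ! k, xs ! Suc k) \<in> A)"

definition path_arcs :: "'a list \<Rightarrow> ('a \<times> 'a) set" where
  "path_arcs xs = set (zip xs (tl xs))"

definition dcycle :: "('a \<times> 'a) set \<Rightarrow> 'a list \<Rightarrow> bool" where
  "dcycle A xs \<longleftrightarrow> length xs \<ge> 2 \<and> dpath A xs \<and> (last xs, hd xs) \<in> A"

definition cycle_arcs :: "'a list \<Rightarrow> ('a \<times> 'a) set" where
  "cycle_arcs xs = set (zip xs (tl xs @ [hd xs]))"

definition path_ear :: "('a \<times> 'a) set \<Rightarrow> 'a set \<Rightarrow> 'a list \<Rightarrow> bool" where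
  "path_ear A VH xs \<longleftrightarrow> dpath A xs \<and> hd xs \<in> VH \<and> last xs \<in> VH
      \<and> (\<forall>x \<in> set (butlast (tl xs)). x \<notin> VH)"

definition cycle_ear :: "('a \<times> 'a) set \<Rightarrow> 'a set \<Rightarrow> 'a list \<Rightarrow> bool" where
  "cycle_ear A VH xs \<longleftrightarrow> dcycle A xs \<and> card (set xs \<inter> VH) = 1"

definition ear_decomp_min :: "nat \<Rightarrow> 'a set \<Rightarrow> ('a \<times> 'a) set \<Rightarrow> bool" where
  "ear_decomp_min i V A \<longleftrightarrow>
     (\<exists>(k::nat) (Vs :: nat \<Rightarrow> 'a set) (As :: nat \<Rightarrow> ('a \<times> 'a) set) (P :: nat \<Rightarrow> 'a list) c.
        dcycle A c \<and> Vs 0 = set c \<and> As 0 = cycle_arcs c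
      \<and> (\<forall>j \<le> k. strong (Vs j) (As j))
      \<and> (\<forall>j < k.
           ((path_ear A (Vs j) (P j) \<and> length (P j) - 1 \<ge> i
               \<and> As (Suc j) = As j \<union> path_arcs (P j))
          \<or> (cycle_ear A (Vs j) (P j) \<and> length (P j) \<ge> i
               \<and> As (Suc j) = As j \<union> cycle_arcs (P j)))
           \<and> Vs (Suc j) = Vs j \<union> set (P j))
      \<and> Vs k = V \<and> As k = A)"

definition LE :: "nat \<Rightarrow> 'a set \<Rightarrow> ('a \<times> 'a) set \<Rightarrow> bool" where
  "LE i V A \<longleftrightarrow> digraph V A \<and> strong V A \<and> ear_decomp_min i V A"

definition out_nbrs :: "('a \<times> 'a) set \<Rightarrow> 'a \<Rightarrow> 'a set" where
  "out_nbrs A v = {u. (v, u) \<in> A}"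

definition second_out_nbrs :: "('a \<times> 'a) set \<Rightarrow> 'a \<Rightarrow> 'a set" where
  "second_out_nbrs A v = (\<Union>u \<in> out_nbrs A v. out_nbrs A u) - out_nbrs A v"

end

theory Submission
  imports Defs
begin

lemma zip_func:
  assumes "distinct xs" "(x, y) \<in> set (zip xs ys)" "(x, y') \<in> set (zip xs ys)"
  shows "y = y'"
proof -
  obtain n where n: "xs ! n = x" "ys ! n = y" "n < length xs" "n < length ys"
    using assms(2) by (auto simp: in_set_zip)
  obtain n' where n': "xs ! n' = x" "ys ! n' = y'" "n' < length xs" "n' < length ys"
    using assms(3) by (auto simp: in_set_zip)
  have "n = n'" using n n' assms(1) nth_eq_iff_index_eq by metis
  then show ?thesis using n n' by simp
qed

lemma zip_sub: "set (zip xs ys) \<subseteq> set xs \<times> set ys"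
  by (auto dest: set_zip_leftD set_zip_rightD)
lemma path_arcs_sub: "path_arcs xs \<subseteq> set xs \<times> set xs"
proof -
  have "set (tl xs) \<subseteq> set xs" by (cases xs) auto
  then show ?thesis unfolding path_arcs_def using zip_sub[of xs "tl xs"] by blast
qed
lemma cycle_arcs_sub: "xs \<noteq> [] \<Longrightarrow> cycle_arcs xs \<subseteq> set xs \<times> set xs"
proof -
  assume "xs \<noteq> []"
  then have "set (tl xs @ [hd xs]) \<subseteq> set xs" by (cases xs) auto
  then show ?thesis unfolding cycle_arcs_def using zip_sub[of xs "tl xs @ [hd xs]"] by blast
qed

lemma finish:
  assumes dg: "digraph V A" and st: "strong V A" and x: "x \<in> V"
    and fn: "\<forall>y y'. (x,y)\<in>A \<longrightarrow> (x,y')\<in>A \<longrightarrow> y = y'"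
  shows "\<exists>v \<in> V. card (second_out_nbrs A v) \<ge> card (out_nbrs A v)"
proof (cases "out_nbrs A x = {}")
  case True then show ?thesis using x by (metis card.empty le0)
next
  case False
  then obtain u where u: "(x,u) \<in> A" unfolding out_nbrs_def by auto
  have on: "out_nbrs A x = {u}" using u fn unfolding out_nbrs_def by auto
  have uV: "u \<in> V" using u dg unfolding digraph_def by auto
  have ux: "u \<noteq> x" using u dg unfolding digraph_def by auto
  have "(u, x) \<in> (A \<inter> V \<times> V)\<^sup>*" using st uV x unfolding strong_def by auto
  then obtain w where w: "(u, w) \<in> A"
    using ux by (metis IntD1 converse_rtranclE)
  have "w \<noteq> u" using w dg unfolding digraph_def by auto
  then have "w \<in> second_out_nbrs A x" using w on unfolding second_out_nbrs_def out_nbrs_def by auto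
  moreover have "finite (second_out_nbrs A x)"
  proof -
    have "second_out_nbrs A x \<subseteq> V" using dg unfolding second_out_nbrs_def out_nbrs_def digraph_def by auto
    then show ?thesis using dg finite_subset unfolding digraph_def by auto
  qed
  ultimately have "card (second_out_nbrs A x) \<ge> 1"
    by (metis One_nat_def Suc_leI card_gt_0_iff empty_iff)
  then have "card (out_nbrs A x) \<le> card (second_out_nbrs A x)" using on by simp
  then show ?thesis using x by blast
qed

theorem mainTheorem1:
  fixes i :: nat and V :: "'a set" and A :: "('a \<times> 'a) set"
  assumes "i \<ge> 2" and "oriented V A" and "LE i V A"
  shows "\<exists>v \<in> V. card (second_out_nbrs A v) \<ge> card (out_nbrs A v)"
proof -
  have dg: "digraph V A" and st: "strong V A" using assms(3) unfolding LE_def by auto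
  obtain k Vs As P c where c: "dcycle A c" and V0: "Vs 0 = set c" and A0: "As 0 = cycle_arcs c"
    and steps: "\<forall>j < k.
           ((path_ear A (Vs j) (P j) \<and> length (P j) - 1 \<ge> i
               \<and> As (Suc j) = As j \<union> path_arcs (P j))
          \<or> (cycle_ear A (Vs j) (P j) \<and> length (P j) \<ge> i
               \<and> As (Suc j) = As j \<union> cycle_arcs (P j)))
           \<and> Vs (Suc j) = Vs j \<union> set (P j)"
    and Vk: "Vs k = V" and Ak: "As k = A"
  proof -
    have "ear_decomp_min i V A" using assms(3) unfolding LE_def by simp
    then obtain k Vs As P c where H: "dcycle A c \<and> Vs 0 = set c \<and> As 0 = cycle_arcs c
      \<and> (\<forall>j \<le> k. strong (Vs j) (As j))
      \<and> (\<forall>j < k.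
           ((path_ear A (Vs j) (P j) \<and> length (P j) - 1 \<ge> i
               \<and> As (Suc j) = As j \<union> path_arcs (P j))
          \<or> (cycle_ear A (Vs j) (P j) \<and> length (P j) \<ge> i
               \<and> As (Suc j) = As j \<union> cycle_arcs (P j)))
           \<and> Vs (Suc j) = Vs j \<union> set (P j))
      \<and> Vs k = V \<and> As k = A" unfolding ear_decomp_min_def by auto
    show ?thesis apply (rule that[of c Vs As k P]) using H apply simp_all done
  qed
  have sub: "j \<le> k \<Longrightarrow> As j \<subseteq> Vs j \<times> Vs j" for j
  proof (induction j)
    case 0
    have "c \<noteq> []" using c unfolding dcycle_def by auto
    then show ?case using cycle_arcs_sub A0 V0 by auto
  next
    case (Suc j)
    then have IH: "As j \<subseteq> Vs j \<times> Vs j" and s: "j < k" by auto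
    have "P j \<noteq> []" using steps s unfolding path_ear_def cycle_ear_def dcycle_def dpath_def by auto
    have pc: "As (Suc j) = As j \<union> path_arcs (P j) \<or> As (Suc j) = As j \<union> cycle_arcs (P j)"
      and vs: "Vs (Suc j) = Vs j \<union> set (P j)" using steps s by auto
    have "path_arcs (P j) \<subseteq> Vs (Suc j) \<times> Vs (Suc j)" using path_arcs_sub[of "P j"] vs by auto
    moreover have "cycle_arcs (P j) \<subseteq> Vs (Suc j) \<times> Vs (Suc j)" using cycle_arcs_sub[of "P j"] vs \<open>P j \<noteq> []\<close> by auto
    moreover have "As j \<subseteq> Vs (Suc j) \<times> Vs (Suc j)" using IH vs by auto
    ultimately show ?case using pc by auto
  qed
  have "\<exists>x\<in>V. \<forall>y y'. (x,y)\<in>A \<longrightarrow> (x,y')\<in>A \<longrightarrow> y = y'"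
  proof (cases k)
    case 0
    have d: "distinct c" "c \<noteq> []" using c unfolding dcycle_def dpath_def by auto
    show ?thesis
    proof
      show "hd c \<in> V" using d Vk V0 0 by auto
      show "\<forall>y y'. (hd c,y)\<in>A \<longrightarrow> (hd c,y')\<in>A \<longrightarrow> y = y'"
      proof (intro allI impI)
        fix y y' assume "(hd c, y) \<in> A" "(hd c, y') \<in> A"
        then have "(hd c, y) \<in> set (zip c (tl c @ [hd c]))" "(hd c, y') \<in> set (zip c (tl c @ [hd c]))"
          using A0 Ak 0 unfolding cycle_arcs_def by auto
        then show "y = y'" by (rule zip_func[OF d(1)])
      qed
    qed
  next
    case (Suc m)
    have mk: "m < k" using Suc by auto
    note st_m = steps[rule_format, OF mk]
    have subm: "As m \<subseteq> Vs m \<times> Vs m" using sub mk by auto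
    have VS: "V = Vs m \<union> set (P m)" using st_m Vk Suc by simp
    have AS: "A = As m \<union> path_arcs (P m) \<or> A = As m \<union> cycle_arcs (P m)"
      using st_m Ak Suc by (elim disjE conjE) auto
    have dP: "distinct (P m)" using st_m unfolding path_ear_def cycle_ear_def dcycle_def dpath_def by (elim disjE conjE) simp_all
    obtain x where x: "x \<in> set (P m)" "x \<notin> Vs m"
    proof (cases "path_ear A (Vs m) (P m) \<and> length (P m) - 1 \<ge> i")
      case True
      then have len: "length (P m) \<ge> 3" and pe: "\<forall>x \<in> set (butlast (tl (P m))). x \<notin> Vs m"
        using assms(1) unfolding path_ear_def by auto
      have "P m ! 1 \<in> set (butlast (tl (P m)))"
      proof -
        have "butlast (tl (P m)) ! 0 = P m ! 1" using len
          by (simp add: nth_butlast nth_tl)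
        moreover have "0 < length (butlast (tl (P m)))" using len by simp
        ultimately show ?thesis by (metis nth_mem)
      qed
      moreover have "P m ! 1 \<in> set (P m)" using len by simp
      ultimately show ?thesis using pe by (intro that[of "P m ! 1"]) auto
    next
      case False
      then have ce: "cycle_ear A (Vs m) (P m)" using st_m by auto
      then have l2: "length (P m) \<ge> 2" and c1: "card (set (P m) \<inter> Vs m) = 1"
        unfolding cycle_ear_def dcycle_def by auto
      have cP: "card (set (P m)) \<ge> 2" using l2 distinct_card[OF dP] by simp
      have "\<not> set (P m) \<subseteq> Vs m"
      proof
        assume "set (P m) \<subseteq> Vs m"
        then have "set (P m) \<inter> Vs m = set (P m)" by auto
        then show False using c1 cP by simp
      qed
      then obtain y where "y \<in> set (P m)" "y \<notin> Vs m" by auto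
      then show ?thesis by (rule that)
    qed
    show ?thesis
    proof
      show "x \<in> V" using VS x by auto
      have notm: "\<And>y. (x,y) \<notin> As m" using subm x by auto
      show "\<forall>y y'. (x,y)\<in>A \<longrightarrow> (x,y')\<in>A \<longrightarrow> y = y'"
      proof (intro allI impI)
        fix y y' assume a: "(x, y) \<in> A" "(x, y') \<in> A"
        show "y = y'"
        proof (cases "A = As m \<union> path_arcs (P m)")
          case True
          then have "(x, y) \<in> set (zip (P m) (tl (P m)))" "(x, y') \<in> set (zip (P m) (tl (P m)))"
            using a notm unfolding path_arcs_def by auto
          then show ?thesis by (rule zip_func[OF dP])
        next
          case False
          then have "A = As m \<union> cycle_arcs (P m)" using AS by auto
          then have "(x, y) \<in> set (zip (P m) (tl (P m) @ [hd (P m)]))" "(x, y') \<in> set (zip (P m) (tl (P m) @ [hd (P m)]))"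
            using a notm unfolding cycle_arcs_def by auto
          then show ?thesis by (rule zip_func[OF dP])
        qed
      qed
    qed
  qed
  then obtain x where "x \<in> V" "\<forall>y y'. (x,y)\<in>A \<longrightarrow> (x,y')\<in>A \<longrightarrow> y = y'" by blast
  then show ?thesis by (rule finish[OF dg st])
qed

end
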